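(* Let $\alpha>0$ and let $n$ be a positive integer. Let $f_n(x_1,\dots,x_n;\theta)$ be the joint probability density or mass function of random variables $X_1,\dots,X_n$, parameterized by $\theta\in\Theta\subseteq\mathbb{R}$. Assume there is a statistic $\varphi_n=\varphi(X_1,\dots,X_n)$ and a function $\Lambda$ such that $\frac{f_n(X_1,\dots,X_n;\theta_1)}{f_n(X_1,\dots,X_n;\theta_0)}=\Lambda(\varphi_n,\theta_0,\theta_1)$ for all $\theta_0,\theta_1\in\Theta$, where $\Lambda(\varphi_n,\theta_0,\theta_1)$ is increasing with respect to $\varphi_n$ whenever $\theta_0<\theta_1$. Let $\widehat{\theta}_n$ be a function of $\varphi_n$ taking values in $\Theta$. Then for every $\theta\in\Theta$, $$\Pr\Big\{\tfrac{f_n(X_1,\dots,X_n;\theta)}{f_n(X_1,\dots,X_n;\widehat\theta_n)}\le\tfrac{\alpha}{2},\ \widehat\theta_n\le\theta\ \Big|\ \theta\Big\}\le\tfrac{\alpha}{2},\qquad \Pr\Big\{\tfrac{f_n(X_1,\dots,X_n;\theta)}{f_n(X_1,\dots,X_n;\widehat\theta_n)}\le\tfrac{\alpha}{2},\ \widehat\theta_n\ge\theta\ \Big|\ \theta\Big\}\le\tfrac{\alpha}{2},$$ $$\Pr\Big\{\tfrac{f_n(X_1,\dots,X_n;\theta)}{f_n(X_1,\dots,X_n;\widehat\theta_n)}\le\tfrac{\alpha}{2}\ \Big|\ \theta\Big\}\le\alpha .$$ Moreover, if in addition $\widehat\theta_n$ is a maximum likelihood estimator of $\theta$, then for every nonempty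 subset $\mathscr{S}\subseteq\Theta$ and every $\theta\in\mathscr{S}$, $$\Pr\Big\{\tfrac{\sup_{\vartheta\in\mathscr{S}}f_n(X_1,\dots,X_n;\vartheta)}{\sup_{\vartheta\in\Theta}f_n(X_1,\dots,X_n;\vartheta)}\le\tfrac{\alpha}{2},\ \widehat\theta_n\le\inf\mathscr{S}\ \Big|\ \theta\Big\}\le\tfrac{\alpha}{2},\qquad \Pr\Big\{\tfrac{\sup_{\vartheta\in\mathscr{S}}f_n(X_1,\dots,X_n;\vartheta)}{\sup_{\vartheta\in\Theta}f_n(X_1,\dots,X_n;\vartheta)}\le\tfrac{\alpha}{2},\ \widehat\theta_n\ge\sup\mathscr{S}\ \Big|\ \theta\Big\}\le\tfrac{\alpha}{2},$$ $$\Pr\Big\{\tfrac{\sup_{\vartheta\in\mathscr{S}}f_n(X_1,\dots,X_n;\vartheta)}{\sup_{\vartheta\in\Theta}f_n(X_1,\dots,X_n;\vartheta)}\le\tfrac{\alpha}{2}\ \Big|\ \theta\Big\}\le\alpha .$$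
   Context: $\Pr\{\cdot\mid\theta\}$ denotes probability when $X_1,\dots,X_n$ have joint density/mass function $f_n(\cdot;\theta)$. The random variables $X_1,\dots,X_n$ need not be independent. *)

theory Defs
  imports "HOL-Probability.Probability"
begin

text \<open>Probability of an event (given by a predicate on the sample space) when the
observation has density/mass function \<open>f \<theta>\<close> with respect to the dominating
measure \<open>M\<close> (Lebesgue measure for densities, counting measure for mass functions).
It is defined as the outer probability, i.e. the infimum of the probabilities of
measurable supersets; for measurable events this is the ordinary probability.\<close>

definition Pr :: "'a measure \<Rightarrow> (real \<Rightarrow> 'a \<Rightarrow> real) \<Rightarrow> real \<Rightarrow> ('a \<Rightarrow> bool) \<Rightarrow> ennreal" where
  "Pr M f \<theta> P =
     (INF A \<in> {A \<in> sets M. {x \<in> space M. P x} \<subseteq> A}.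
        emeasure (density M (\<lambda>x. ennreal (f \<theta> x))) A)"

end

theory Submission
  imports Defs
begin

lemma Pr_le:
  assumes "B \<in> sets M" "{x\<in>space M. P x} \<subseteq> B"
    "emeasure (density M (\<lambda>x. ennreal (f \<theta> x))) B \<le> e"
  shows "Pr M f \<theta> P \<le> e"
  unfolding Pr_def by (rule INF_lower2[of B]) (use assms in auto)

lemma Pr_mono:
  assumes "\<forall>x\<in>space M. P x \<longrightarrow> Q x"
  shows "Pr M f \<theta> P \<le> Pr M f \<theta> Q"
  unfolding Pr_def by (rule INF_superset_mono) (use assms in auto)

lemma cofinal:
  fixes V :: "real set"
  assumes "V \<noteq> {}"
  shows "\<exists>a::nat \<Rightarrow> real. (\<forall>k. a k \<in> V) \<and> (\<forall>v\<in>V. \<exists>k. v \<le> a k)"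
proof (cases "\<exists>m\<in>V. \<forall>v\<in>V. v \<le> m")
  case True
  then obtain m where "m \<in> V" "\<forall>v\<in>V. v \<le> m" by blast
  then show ?thesis by (intro exI[of _ "\<lambda>_. m"]) auto
next
  case False
  define r where "r k = (if bdd_above V then Sup V - 1 / (real k + 1) else real k)" for k
  have "\<forall>k. \<exists>v\<in>V. r k < v"
  proof
    fix k
    show "\<exists>v\<in>V. r k < v"
    proof (cases "bdd_above V")
      case True
      have "Sup V - 1 / (real k + 1) < Sup V" by simp
      then have "\<exists>v\<in>V. Sup V - 1 / (real k + 1) < v" using less_cSup_iff[OF assms True] by blast
      then show ?thesis using True by (simp add: r_def)
    next
      case False
      have "\<not> (\<forall>v\<in>V. v \<le> real k)"
      proof
        assume "\<forall>v\<in>V. v \<le> real k"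
        then have "bdd_above V" by (intro bdd_aboveI) blast
        then show False using False by blast
      qed
      then obtain v where "v \<in> V" "real k < v" by (auto simp: not_le)
      then show ?thesis using False by (auto simp: r_def)
    qed
  qed
  then have "\<forall>k. \<exists>v. v \<in> V \<and> r k < v" by blast
  then have "\<exists>a. \<forall>k. a k \<in> V \<and> r k < a k" by (rule choice)
  then obtain a where a: "\<forall>k. a k \<in> V \<and> r k < a k" by blast
  have "\<forall>v\<in>V. \<exists>k. v \<le> a k"
  proof
    fix v assume v: "v \<in> V"
    show "\<exists>k. v \<le> a k"
    proof (cases "bdd_above V")
      case True
      have "v \<le> Sup V" using True v by (simp add: cSup_upper)
      moreover have "v \<noteq> Sup V"
      proof
        assume "v = Sup V"
        then have "\<forall>w\<in>V. w \<le> v" using True by (simp add: cSup_upper)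
        then show False using False v by blast
      qed
      ultimately have "0 < Sup V - v" by simp
      then obtain k where k0: "1 / real (Suc k) < Sup V - v"
        by (rule nat_approx_posE)
      then have k: "1 / (real k + 1) < Sup V - v" by (simp add: add.commute)
      have "v < r k" using k True by (simp add: r_def)
      moreover have "r k < a k" using a by blast
      ultimately have "v \<le> a k" by linarith
      then show ?thesis by blast
    next
      case False
      obtain k where "v \<le> real k" using real_arch_simple by blast
      moreover have "real k < a k" using a False unfolding r_def by auto
      ultimately have "v \<le> a k" by linarith
      then show ?thesis by blast
    qed
  qed
  moreover have "\<forall>k. a k \<in> V" using a by blast
  ultimately show ?thesis by (intro exI[of _ a]) blast
qed

lemma cover:
  fixes \<phi> :: "'a \<Rightarrow> real"
  assumes phi: "\<phi> \<in> borel_measurable N" and T: "T \<subseteq> space N"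
    and bd: "\<forall>x\<in>T. emeasure N {y\<in>space N. \<phi> y \<le> \<phi> x} \<le> e"
  shows "\<exists>B\<in>sets N. T \<subseteq> B \<and> emeasure N B \<le> e"
proof (cases "T = {}")
  case True then show ?thesis by (intro bexI[of _ "{}"]) auto
next
  case False
  then obtain a :: "nat \<Rightarrow> real" where a: "\<forall>k. a k \<in> \<phi> ` T" "\<forall>v\<in>\<phi> ` T. \<exists>k. v \<le> a k"
    using cofinal[of "\<phi> ` T"] by auto
  define b where "b n = Max (a ` {..n})" for n
  define C where "C n = {y\<in>space N. \<phi> y \<le> b n}" for n
  have Cs: "C n \<in> sets N" for n unfolding C_def using phi by measurable
  have bm: "b m \<le> b n" if "m \<le> n" for m n
    unfolding b_def using that by (intro Max_mono) auto
  have inc: "incseq C"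
  proof (rule incseq_SucI)
    fix n show "C n \<subseteq> C (Suc n)"
      using bm[of n "Suc n"] unfolding C_def by auto
  qed
  have Ce: "emeasure N (C n) \<le> e" for n
  proof -
    have "b n \<in> a ` {..n}" unfolding b_def by (rule Max_in) auto
    then obtain j where "b n = a j" by blast
    then have "b n \<in> \<phi> ` T" using a(1) by simp
    then obtain x where x: "x \<in> T" "b n = \<phi> x" by blast
    then show ?thesis using bd unfolding C_def by simp
  qed
  have "emeasure N (\<Union>(range C)) = (SUP n. emeasure N (C n))"
  proof -
    have "range C \<subseteq> sets N" using Cs by auto
    from SUP_emeasure_incseq[OF this inc] show ?thesis by simp
  qed
  also have "\<dots> \<le> e" using Ce by (simp add: SUP_least)
  finally have "emeasure N (\<Union>(range C)) \<le> e" .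
  moreover have "T \<subseteq> \<Union>(range C)"
  proof
    fix x assume x: "x \<in> T"
    then obtain k where "\<phi> x \<le> a k" using a(2) by auto
    moreover have "a k \<le> b k" unfolding b_def by (rule Max_ge) auto
    ultimately have "\<phi> x \<le> b k" by linarith
    then have "x \<in> C k" using x T unfolding C_def by auto
    then show "x \<in> \<Union>(range C)" by blast
  qed
  ultimately show ?thesis using Cs by (intro bexI[of _ "\<Union>(range C)"]) auto
qed

lemma dens_le:
  fixes g1 g2 :: "'a \<Rightarrow> real"
  assumes C: "C \<in> sets M" and m1: "g1 \<in> borel_measurable M" and m2: "g2 \<in> borel_measurable M"
    and c: "c \<ge> 0" and le: "\<forall>y\<in>C. g1 y \<le> c * g2 y" and nn: "\<forall>y\<in>space M. g2 y \<ge> 0"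
    and P: "prob_space (density M (\<lambda>x. ennreal (g2 x)))"
  shows "emeasure (density M (\<lambda>x. ennreal (g1 x))) C \<le> ennreal c"
proof -
  have "emeasure (density M (\<lambda>x. ennreal (g1 x))) C = (\<integral>\<^sup>+x. ennreal (g1 x) * indicator C x \<partial>M)"
    using C m1 by (simp add: emeasure_density)
  also have "\<dots> \<le> (\<integral>\<^sup>+x. ennreal c * (ennreal (g2 x) * indicator C x) \<partial>M)"
  proof (rule nn_integral_mono)
    fix x assume x: "x \<in> space M"
    show "ennreal (g1 x) * indicator C x \<le> ennreal c * (ennreal (g2 x) * indicator C x)"
    proof (cases "x \<in> C")
      case True
      then have "ennreal (g1 x) \<le> ennreal (c * g2 x)" using le by (simp add: ennreal_leI)
      also have "\<dots> = ennreal c * ennreal (g2 x)" using c nn x by (simp add: ennreal_mult)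
      finally show ?thesis using True by simp
    qed simp
  qed
  also have "\<dots> = ennreal c * (\<integral>\<^sup>+x. ennreal (g2 x) * indicator C x \<partial>M)"
    using C m2 by (intro nn_integral_cmult) auto
  also have "\<dots> = ennreal c * emeasure (density M (\<lambda>x. ennreal (g2 x))) C"
    using C m2 by (simp add: emeasure_density)
  also have "\<dots> \<le> ennreal c * 1"
    using prob_space.emeasure_le_1[OF P] by (intro mult_left_mono) auto
  finally show ?thesis by simp
qed

theorem theorem2:
  fixes M :: "'a measure"
    and f :: "real \<Rightarrow> 'a \<Rightarrow> real"
    and \<Theta> :: "real set"
    and \<phi> :: "'a \<Rightarrow> real"
    and \<Lambda> :: "real \<Rightarrow> real \<Rightarrow> real \<Rightarrow> real"
    and g :: "real \<Rightarrow> real"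
    and \<alpha> :: real
  assumes alpha_pos: "\<alpha> > 0"
    and f_meas: "\<And>\<theta>. \<theta> \<in> \<Theta> \<Longrightarrow> f \<theta> \<in> borel_measurable M"
    and f_nonneg: "\<And>\<theta> x. \<theta> \<in> \<Theta> \<Longrightarrow> x \<in> space M \<Longrightarrow> f \<theta> x \<ge> 0"
    and f_prob: "\<And>\<theta>. \<theta> \<in> \<Theta> \<Longrightarrow> prob_space (density M (\<lambda>x. ennreal (f \<theta> x)))"
    and phi_meas: "\<phi> \<in> borel_measurable M"
    and LR: "\<And>\<theta>0 \<theta>1 x. \<theta>0 \<in> \<Theta> \<Longrightarrow> \<theta>1 \<in> \<Theta> \<Longrightarrow> x \<in> space M \<Longrightarrow>
               f \<theta>1 x = \<Lambda> (\<phi> x) \<theta>0 \<theta>1 * f \<theta>0 x"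
    and LR_mono: "\<And>\<theta>0 \<theta>1. \<theta>0 \<in> \<Theta> \<Longrightarrow> \<theta>1 \<in> \<Theta> \<Longrightarrow> \<theta>0 < \<theta>1 \<Longrightarrow>
               mono_on (\<phi> ` space M) (\<lambda>t. \<Lambda> t \<theta>0 \<theta>1)"
    and g_range: "\<And>x. x \<in> space M \<Longrightarrow> g (\<phi> x) \<in> \<Theta>"
  shows "(\<forall>\<theta>\<in>\<Theta>.
            Pr M f \<theta> (\<lambda>x. f \<theta> x / f (g (\<phi> x)) x \<le> \<alpha> / 2 \<and> g (\<phi> x) \<le> \<theta>) \<le> ennreal (\<alpha> / 2)
          \<and> Pr M f \<theta> (\<lambda>x. f \<theta> x / f (g (\<phi> x)) x \<le> \<alpha> / 2 \<and> g (\<phi> x) \<ge> \<theta>) \<le> ennreal (\<alpha> / 2)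
          \<and> Pr M f \<theta> (\<lambda>x. f \<theta> x / f (g (\<phi> x)) x \<le> \<alpha> / 2) \<le> ennreal \<alpha>)
       \<and> ((\<forall>x\<in>space M. \<forall>t\<in>\<Theta>. f t x \<le> f (g (\<phi> x)) x) \<longrightarrow>
          (\<forall>S. S \<noteq> {} \<and> S \<subseteq> \<Theta> \<longrightarrow> (\<forall>\<theta>\<in>S.
             Pr M f \<theta> (\<lambda>x. (SUP t\<in>S. f t x) / (SUP t\<in>\<Theta>. f t x) \<le> \<alpha> / 2
                             \<and> ereal (g (\<phi> x)) \<le> (INF s\<in>S. ereal s)) \<le> ennreal (\<alpha> / 2)
           \<and> Pr M f \<theta> (\<lambda>x. (SUP t\<in>S. f t x) / (SUP t\<in>\<Theta>. f t x) \<le> \<alpha> / 2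
                             \<and> ereal (g (\<phi> x)) \<ge> (SUP s\<in>S. ereal s)) \<le> ennreal (\<alpha> / 2)
           \<and> Pr M f \<theta> (\<lambda>x. (SUP t\<in>S. f t x) / (SUP t\<in>\<Theta>. f t x) \<le> \<alpha> / 2) \<le> ennreal \<alpha>)))"
proof -
  define gh where "gh x = g (\<phi> x)" for x
  have sd[simp]: "sets (density M h) = sets M" "space (density M h) = space M" for h
    by auto
  have ratio_le: "f \<theta> y \<le> (\<alpha>/2) * f \<theta> y" if "\<alpha>/2 \<ge> 1" "\<theta> \<in> \<Theta>" "y \<in> space M" for \<theta> y
  proof -
    have "1 * f \<theta> y \<le> (\<alpha>/2) * f \<theta> y" using that f_nonneg by (intro mult_right_mono) auto
    then show ?thesis by simp
  qed
  have Zcov: "{x\<in>space M. f \<theta> x = 0} \<in> sets M \<and>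
      emeasure (density M (\<lambda>x. ennreal (f \<theta> x))) {x\<in>space M. f \<theta> x = 0} = 0"
    if th: "\<theta> \<in> \<Theta>" for \<theta>
  proof
    show Zs: "{x\<in>space M. f \<theta> x = 0} \<in> sets M" using f_meas[OF th] by measurable
    have "emeasure (density M (\<lambda>x. ennreal (f \<theta> x))) {x\<in>space M. f \<theta> x = 0}
        = (\<integral>\<^sup>+x. ennreal (f \<theta> x) * indicator {x\<in>space M. f \<theta> x = 0} x \<partial>M)"
      using Zs f_meas[OF th] by (simp add: emeasure_density)
    also have "\<dots> = (\<integral>\<^sup>+x. 0 \<partial>M)"
      by (intro nn_integral_cong) (auto simp: indicator_def)
    finally show "emeasure (density M (\<lambda>x. ennreal (f \<theta> x))) {x\<in>space M. f \<theta> x = 0} = 0" by simp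
  qed
  have cov1: "\<exists>B\<in>sets M. {x\<in>space M. f \<theta> x / f (g (\<phi> x)) x \<le> \<alpha> / 2 \<and> g (\<phi> x) \<le> \<theta>} \<subseteq> B
      \<and> emeasure (density M (\<lambda>x. ennreal (f \<theta> x))) B \<le> ennreal (\<alpha>/2)"
    if th: "\<theta> \<in> \<Theta>" for \<theta>
  proof -
    let ?N = "density M (\<lambda>x. ennreal (f \<theta> x))"
    define Z where "Z = {x\<in>space M. f \<theta> x = 0}"
    define T where "T = {x\<in>space M. f \<theta> x \<noteq> 0 \<and> f \<theta> x / f (g (\<phi> x)) x \<le> \<alpha> / 2 \<and> g (\<phi> x) \<le> \<theta>}"
    have bd: "\<forall>x\<in>T. emeasure ?N {y\<in>space ?N. \<phi> y \<le> \<phi> x} \<le> ennreal (\<alpha>/2)"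
    proof
      fix x assume x: "x \<in> T"
      define t where "t = g (\<phi> x)"
      have xs: "x \<in> space M" and t: "t \<in> \<Theta>" using x g_range unfolding T_def t_def by auto
      have fx: "f \<theta> x > 0" using x f_nonneg[OF th xs] unfolding T_def by auto
      have rat: "f \<theta> x / f t x \<le> \<alpha>/2" "t \<le> \<theta>" using x unfolding T_def t_def by auto
      have key: "\<forall>y\<in>{y\<in>space M. \<phi> y \<le> \<phi> x}. f \<theta> y \<le> (\<alpha>/2) * f t y"
      proof
        fix y assume y: "y \<in> {y\<in>space M. \<phi> y \<le> \<phi> x}"
        then have ys: "y \<in> space M" and le: "\<phi> y \<le> \<phi> x" by auto
        show "f \<theta> y \<le> (\<alpha>/2) * f t y"
        proof (cases "t = \<theta>")
          case True
          then have "\<alpha>/2 \<ge> 1" using rat fx by simp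
          then show ?thesis using ratio_le th ys True by simp
        next
          case False
          then have lt: "t < \<theta>" using rat by simp
          have hx: "f \<theta> x = \<Lambda> (\<phi> x) t \<theta> * f t x" using LR[OF t th xs] .
          have hy: "f \<theta> y = \<Lambda> (\<phi> y) t \<theta> * f t y" using LR[OF t th ys] .
          have ftx: "f t x > 0" using hx fx f_nonneg[OF t xs] by (cases "f t x = 0") auto
          have L: "\<Lambda> (\<phi> x) t \<theta> \<le> \<alpha>/2" using hx rat ftx by simp
          have mo: "\<Lambda> (\<phi> y) t \<theta> \<le> \<Lambda> (\<phi> x) t \<theta>"
            using mono_onD[OF LR_mono[OF t th lt], of "\<phi> y" "\<phi> x"] xs ys le by auto
          have "f \<theta> y \<le> \<Lambda> (\<phi> x) t \<theta> * f t y" using hy mo f_nonneg[OF t ys]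
            by (simp add: mult_right_mono)
          also have "\<dots> \<le> (\<alpha>/2) * f t y" using mult_right_mono[OF L f_nonneg[OF t ys]] .
          finally show ?thesis .
        qed
      qed
      have Cs: "{y\<in>space M. \<phi> y \<le> \<phi> x} \<in> sets M" using phi_meas by measurable
      have "emeasure ?N {y\<in>space M. \<phi> y \<le> \<phi> x} \<le> ennreal (\<alpha>/2)"
        by (rule dens_le[OF Cs f_meas[OF th] f_meas[OF t] _ key _ f_prob[OF t]])
          (use alpha_pos f_nonneg[OF t] in auto)
      then show "emeasure ?N {y\<in>space ?N. \<phi> y \<le> \<phi> x} \<le> ennreal (\<alpha>/2)" by simp
    qed
    have "\<phi> \<in> borel_measurable ?N" using phi_meas by simp
    from cover[OF this _ bd] obtain B1 where B1: "B1 \<in> sets M" "T \<subseteq> B1" "emeasure ?N B1 \<le> ennreal (\<alpha>/2)"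
      unfolding T_def by auto
    have Z: "Z \<in> sets M" "emeasure ?N Z = 0" using Zcov[OF th] unfolding Z_def by auto
    have "emeasure ?N (B1 \<union> Z) \<le> emeasure ?N B1 + emeasure ?N Z"
      using B1 Z by (intro emeasure_subadditive) auto
    also have "\<dots> \<le> ennreal (\<alpha>/2)" using B1 Z by simp
    finally have E: "emeasure ?N (B1 \<union> Z) \<le> ennreal (\<alpha>/2)" .
    have "{x\<in>space M. f \<theta> x / f (g (\<phi> x)) x \<le> \<alpha> / 2 \<and> g (\<phi> x) \<le> \<theta>} \<subseteq> T \<union> Z"
      unfolding T_def Z_def by blast
    then have sub: "{x\<in>space M. f \<theta> x / f (g (\<phi> x)) x \<le> \<alpha> / 2 \<and> g (\<phi> x) \<le> \<theta>} \<subseteq> B1 \<union> Z"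
      using B1(2) by blast
    have "B1 \<union> Z \<in> sets M" using B1(1) Z(1) by blast
    then show ?thesis using sub E by blast
  qed
  have cov2: "\<exists>B\<in>sets M. {x\<in>space M. f \<theta> x / f (g (\<phi> x)) x \<le> \<alpha> / 2 \<and> g (\<phi> x) \<ge> \<theta>} \<subseteq> B
      \<and> emeasure (density M (\<lambda>x. ennreal (f \<theta> x))) B \<le> ennreal (\<alpha>/2)"
    if th: "\<theta> \<in> \<Theta>" for \<theta>
  proof -
    let ?N = "density M (\<lambda>x. ennreal (f \<theta> x))"
    define Z where "Z = {x\<in>space M. f \<theta> x = 0}"
    define T where "T = {x\<in>space M. f \<theta> x \<noteq> 0 \<and> f \<theta> x / f (g (\<phi> x)) x \<le> \<alpha> / 2 \<and> g (\<phi> x) \<ge> \<theta>}"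
    have bd: "\<forall>x\<in>T. emeasure ?N {y\<in>space ?N. - \<phi> y \<le> - \<phi> x} \<le> ennreal (\<alpha>/2)"
    proof
      fix x assume x: "x \<in> T"
      define t where "t = g (\<phi> x)"
      have xs: "x \<in> space M" and t: "t \<in> \<Theta>" using x g_range unfolding T_def t_def by auto
      have fx: "f \<theta> x > 0" using x f_nonneg[OF th xs] unfolding T_def by auto
      have rat: "f \<theta> x / f t x \<le> \<alpha>/2" "\<theta> \<le> t" using x unfolding T_def t_def by auto
      have key: "\<forall>y\<in>{y\<in>space M. - \<phi> y \<le> - \<phi> x}. f \<theta> y \<le> (\<alpha>/2) * f t y"
      proof
        fix y assume y: "y \<in> {y\<in>space M. - \<phi> y \<le> - \<phi> x}"
        then have ys: "y \<in> space M" and le: "\<phi> x \<le> \<phi> y" by auto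
        show "f \<theta> y \<le> (\<alpha>/2) * f t y"
        proof (cases "t = \<theta>")
          case True
          then have "\<alpha>/2 \<ge> 1" using rat fx by simp
          then show ?thesis using ratio_le th ys True by simp
        next
          case False
          then have lt: "\<theta> < t" using rat by simp
          have hx': "f \<theta> x = \<Lambda> (\<phi> x) t \<theta> * f t x" using LR[OF t th xs] .
          have hx: "f t x = \<Lambda> (\<phi> x) \<theta> t * f \<theta> x" using LR[OF th t xs] .
          have hy: "f t y = \<Lambda> (\<phi> y) \<theta> t * f \<theta> y" using LR[OF th t ys] .
          have ftx: "f t x > 0" using hx' fx f_nonneg[OF t xs] by (cases "f t x = 0") auto
          have r2: "f \<theta> x \<le> (\<alpha>/2) * f t x" using rat ftx by (simp add: divide_le_eq)
          have "1 * f \<theta> x \<le> ((\<alpha>/2) * \<Lambda> (\<phi> x) \<theta> t) * f \<theta> x" using r2 hx by (simp add: mult.assoc)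
          then have L: "1 \<le> (\<alpha>/2) * \<Lambda> (\<phi> x) \<theta> t" using fx by (simp only: mult_le_cancel_right)
          have mo: "\<Lambda> (\<phi> x) \<theta> t \<le> \<Lambda> (\<phi> y) \<theta> t"
            using mono_onD[OF LR_mono[OF th t lt], of "\<phi> x" "\<phi> y"] xs ys le by auto
          have "f \<theta> y = 1 * f \<theta> y" by simp
          also have "\<dots> \<le> ((\<alpha>/2) * \<Lambda> (\<phi> x) \<theta> t) * f \<theta> y" using L f_nonneg[OF th ys]
            by (intro mult_right_mono) auto
          also have "\<dots> \<le> ((\<alpha>/2) * \<Lambda> (\<phi> y) \<theta> t) * f \<theta> y" using mo alpha_pos f_nonneg[OF th ys]
            by (intro mult_right_mono mult_left_mono) auto
          also have "\<dots> = (\<alpha>/2) * f t y" using hy by simp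
          finally show ?thesis .
        qed
      qed
      have Cs: "{y\<in>space M. - \<phi> y \<le> - \<phi> x} \<in> sets M" using phi_meas by measurable
      have "emeasure ?N {y\<in>space M. - \<phi> y \<le> - \<phi> x} \<le> ennreal (\<alpha>/2)"
        by (rule dens_le[OF Cs f_meas[OF th] f_meas[OF t] _ key _ f_prob[OF t]])
          (use alpha_pos f_nonneg[OF t] in auto)
      then show "emeasure ?N {y\<in>space ?N. - \<phi> y \<le> - \<phi> x} \<le> ennreal (\<alpha>/2)" by simp
    qed
    have "(\<lambda>y. - \<phi> y) \<in> borel_measurable ?N" using phi_meas by simp
    from cover[OF this _ bd] obtain B1 where B1: "B1 \<in> sets M" "T \<subseteq> B1" "emeasure ?N B1 \<le> ennreal (\<alpha>/2)"
      unfolding T_def by auto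
    have Z: "Z \<in> sets M" "emeasure ?N Z = 0" using Zcov[OF th] unfolding Z_def by auto
    have "emeasure ?N (B1 \<union> Z) \<le> emeasure ?N B1 + emeasure ?N Z"
      using B1 Z by (intro emeasure_subadditive) auto
    also have "\<dots> \<le> ennreal (\<alpha>/2)" using B1 Z by simp
    finally have E: "emeasure ?N (B1 \<union> Z) \<le> ennreal (\<alpha>/2)" .
    have "{x\<in>space M. f \<theta> x / f (g (\<phi> x)) x \<le> \<alpha> / 2 \<and> g (\<phi> x) \<ge> \<theta>} \<subseteq> T \<union> Z"
      unfolding T_def Z_def by blast
    then have sub: "{x\<in>space M. f \<theta> x / f (g (\<phi> x)) x \<le> \<alpha> / 2 \<and> g (\<phi> x) \<ge> \<theta>} \<subseteq> B1 \<union> Z"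
      using B1(2) by blast
    have "B1 \<union> Z \<in> sets M" using B1(1) Z(1) by blast
    then show ?thesis using sub E by blast
  qed
  have part1: "Pr M f \<theta> (\<lambda>x. f \<theta> x / f (g (\<phi> x)) x \<le> \<alpha> / 2 \<and> g (\<phi> x) \<le> \<theta>) \<le> ennreal (\<alpha> / 2)
          \<and> Pr M f \<theta> (\<lambda>x. f \<theta> x / f (g (\<phi> x)) x \<le> \<alpha> / 2 \<and> g (\<phi> x) \<ge> \<theta>) \<le> ennreal (\<alpha> / 2)
          \<and> Pr M f \<theta> (\<lambda>x. f \<theta> x / f (g (\<phi> x)) x \<le> \<alpha> / 2) \<le> ennreal \<alpha>"
    if th: "\<theta> \<in> \<Theta>" for \<theta>
  proof -
    let ?N = "density M (\<lambda>x. ennreal (f \<theta> x))"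
    obtain B1 where B1: "B1 \<in> sets M" "{x\<in>space M. f \<theta> x / f (g (\<phi> x)) x \<le> \<alpha> / 2 \<and> g (\<phi> x) \<le> \<theta>} \<subseteq> B1"
        "emeasure ?N B1 \<le> ennreal (\<alpha>/2)" using cov1[OF th] by blast
    obtain B2 where B2: "B2 \<in> sets M" "{x\<in>space M. f \<theta> x / f (g (\<phi> x)) x \<le> \<alpha> / 2 \<and> g (\<phi> x) \<ge> \<theta>} \<subseteq> B2"
        "emeasure ?N B2 \<le> ennreal (\<alpha>/2)" using cov2[OF th] by blast
    have "emeasure ?N (B1 \<union> B2) \<le> emeasure ?N B1 + emeasure ?N B2"
      using B1 B2 by (intro emeasure_subadditive) auto
    also have "\<dots> \<le> ennreal (\<alpha>/2) + ennreal (\<alpha>/2)" using B1 B2 by (intro add_mono) auto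
    also have "\<dots> = ennreal \<alpha>" using alpha_pos by (simp flip: ennreal_plus)
    finally have U: "emeasure ?N (B1 \<union> B2) \<le> ennreal \<alpha>" .
    have sub: "{x\<in>space M. f \<theta> x / f (g (\<phi> x)) x \<le> \<alpha> / 2} \<subseteq> B1 \<union> B2"
    proof
      fix x assume x: "x \<in> {x\<in>space M. f \<theta> x / f (g (\<phi> x)) x \<le> \<alpha> / 2}"
      show "x \<in> B1 \<union> B2"
      proof (cases "g (\<phi> x) \<le> \<theta>")
        case True then show ?thesis using x B1(2) by blast
      next
        case False then have "g (\<phi> x) \<ge> \<theta>" by simp
        then show ?thesis using x B2(2) by blast
      qed
    qed
    have B12: "B1 \<union> B2 \<in> sets M" using B1(1) B2(1) by blast
    show ?thesis
    proof (intro conjI)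
      show "Pr M f \<theta> (\<lambda>x. f \<theta> x / f (g (\<phi> x)) x \<le> \<alpha> / 2 \<and> g (\<phi> x) \<le> \<theta>) \<le> ennreal (\<alpha> / 2)"
        apply (rule Pr_le[of B1]) using B1 by blast+
      show "Pr M f \<theta> (\<lambda>x. f \<theta> x / f (g (\<phi> x)) x \<le> \<alpha> / 2 \<and> g (\<phi> x) \<ge> \<theta>) \<le> ennreal (\<alpha> / 2)"
        apply (rule Pr_le[of B2]) using B2 by blast+
      show "Pr M f \<theta> (\<lambda>x. f \<theta> x / f (g (\<phi> x)) x \<le> \<alpha> / 2) \<le> ennreal \<alpha>"
        apply (rule Pr_le[of "B1 \<union> B2"]) using B12 sub U by blast+
    qed
  qed
  show ?thesis
  proof (intro conjI ballI impI allI)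
    fix \<theta> assume "\<theta> \<in> \<Theta>"
    then show "Pr M f \<theta> (\<lambda>x. f \<theta> x / f (g (\<phi> x)) x \<le> \<alpha> / 2 \<and> g (\<phi> x) \<le> \<theta>) \<le> ennreal (\<alpha> / 2)"
      "Pr M f \<theta> (\<lambda>x. f \<theta> x / f (g (\<phi> x)) x \<le> \<alpha> / 2 \<and> g (\<phi> x) \<ge> \<theta>) \<le> ennreal (\<alpha> / 2)"
      "Pr M f \<theta> (\<lambda>x. f \<theta> x / f (g (\<phi> x)) x \<le> \<alpha> / 2) \<le> ennreal \<alpha>"
      using part1 by auto
  next
    fix S \<theta>
    assume mle: "\<forall>x\<in>space M. \<forall>t\<in>\<Theta>. f t x \<le> f (g (\<phi> x)) x"
      and S: "S \<noteq> {} \<and> S \<subseteq> \<Theta>" and th: "\<theta> \<in> S"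
    have thT: "\<theta> \<in> \<Theta>" using S th by auto
    have imp: "f \<theta> x / f (g (\<phi> x)) x \<le> \<alpha> / 2"
      if xs: "x \<in> space M" and h: "(SUP t\<in>S. f t x) / (SUP t\<in>\<Theta>. f t x) \<le> \<alpha> / 2" for x
    proof -
      have supT: "(SUP t\<in>\<Theta>. f t x) = f (g (\<phi> x)) x"
        using mle xs g_range[OF xs] by (intro cSup_eq_maximum) auto
      have bdd: "bdd_above ((\<lambda>t. f t x) ` S)"
        using mle xs S by (intro bdd_aboveI2[of _ _ "f (g (\<phi> x)) x"]) auto
      have "f \<theta> x \<le> (SUP t\<in>S. f t x)" using bdd th by (rule cSUP_upper2) simp
      then have "f \<theta> x / f (g (\<phi> x)) x \<le> (SUP t\<in>S. f t x) / f (g (\<phi> x)) x"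
        using f_nonneg[OF g_range[OF xs] xs] by (intro divide_right_mono) auto
      also have "\<dots> \<le> \<alpha> / 2" using h supT by simp
      finally show ?thesis .
    qed
    have infle: "(INF s\<in>S. ereal s) \<le> ereal \<theta>" using th by (rule INF_lower)
    have suple: "ereal \<theta> \<le> (SUP s\<in>S. ereal s)" using th by (rule SUP_upper)
    show "Pr M f \<theta> (\<lambda>x. (SUP t\<in>S. f t x) / (SUP t\<in>\<Theta>. f t x) \<le> \<alpha> / 2
                             \<and> ereal (g (\<phi> x)) \<le> (INF s\<in>S. ereal s)) \<le> ennreal (\<alpha> / 2)"
    proof (rule order_trans[OF Pr_mono])
      show "\<forall>x\<in>space M. (SUP t\<in>S. f t x) / (SUP t\<in>\<Theta>. f t x) \<le> \<alpha> / 2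
                             \<and> ereal (g (\<phi> x)) \<le> (INF s\<in>S. ereal s) \<longrightarrow>
            f \<theta> x / f (g (\<phi> x)) x \<le> \<alpha> / 2 \<and> g (\<phi> x) \<le> \<theta>"
      proof (intro ballI impI conjI)
        fix x assume xs: "x \<in> space M" and h: "(SUP t\<in>S. f t x) / (SUP t\<in>\<Theta>. f t x) \<le> \<alpha> / 2
                             \<and> ereal (g (\<phi> x)) \<le> (INF s\<in>S. ereal s)"
        show "f \<theta> x / f (g (\<phi> x)) x \<le> \<alpha> / 2" using imp[OF xs] h by blast
        have "ereal (g (\<phi> x)) \<le> ereal \<theta>" using h infle by (blast intro: order_trans)
        then show "g (\<phi> x) \<le> \<theta>" by simp
      qed
      show "Pr M f \<theta> (\<lambda>x. f \<theta> x / f (g (\<phi> x)) x \<le> \<alpha> / 2 \<and> g (\<phi> x) \<le> \<theta>) \<le> ennreal (\<alpha> / 2)"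
        using part1[OF thT] by auto
    qed
    show "Pr M f \<theta> (\<lambda>x. (SUP t\<in>S. f t x) / (SUP t\<in>\<Theta>. f t x) \<le> \<alpha> / 2
                             \<and> ereal (g (\<phi> x)) \<ge> (SUP s\<in>S. ereal s)) \<le> ennreal (\<alpha> / 2)"
    proof (rule order_trans[OF Pr_mono])
      show "\<forall>x\<in>space M. (SUP t\<in>S. f t x) / (SUP t\<in>\<Theta>. f t x) \<le> \<alpha> / 2
                             \<and> ereal (g (\<phi> x)) \<ge> (SUP s\<in>S. ereal s) \<longrightarrow>
            f \<theta> x / f (g (\<phi> x)) x \<le> \<alpha> / 2 \<and> g (\<phi> x) \<ge> \<theta>"
      proof (intro ballI impI conjI)
        fix x assume xs: "x \<in> space M" and h: "(SUP t\<in>S. f t x) / (SUP t\<in>\<Theta>. f t x) \<le> \<alpha> / 2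
                             \<and> ereal (g (\<phi> x)) \<ge> (SUP s\<in>S. ereal s)"
        show "f \<theta> x / f (g (\<phi> x)) x \<le> \<alpha> / 2" using imp[OF xs] h by blast
        have "ereal \<theta> \<le> ereal (g (\<phi> x))" using h suple by (blast intro: order_trans)
        then show "\<theta> \<le> g (\<phi> x)" by simp
      qed
      show "Pr M f \<theta> (\<lambda>x. f \<theta> x / f (g (\<phi> x)) x \<le> \<alpha> / 2 \<and> g (\<phi> x) \<ge> \<theta>) \<le> ennreal (\<alpha> / 2)"
        using part1[OF thT] by auto
    qed
    show "Pr M f \<theta> (\<lambda>x. (SUP t\<in>S. f t x) / (SUP t\<in>\<Theta>. f t x) \<le> \<alpha> / 2) \<le> ennreal \<alpha>"
    proof (rule order_trans[OF Pr_mono])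
      show "\<forall>x\<in>space M. (SUP t\<in>S. f t x) / (SUP t\<in>\<Theta>. f t x) \<le> \<alpha> / 2 \<longrightarrow>
            f \<theta> x / f (g (\<phi> x)) x \<le> \<alpha> / 2"
        using imp by blast
      show "Pr M f \<theta> (\<lambda>x. f \<theta> x / f (g (\<phi> x)) x \<le> \<alpha> / 2) \<le> ennreal \<alpha>"
        using part1[OF thT] by auto
    qed
  qed
qed

end
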